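(* Let $x_1,x_2,x_3>0$, $\gamma,\delta>0$ with $\gamma\ne1\ne\delta$, and let $$\mathbf{Q}=\begin{pmatrix}1&\delta x_1&x_2&x_3\\ 1/(\delta x_1)&1&x_2/x_1&x_3/x_1\\ 1/x_2&x_1/x_2&1&\gamma x_3/x_2\\ 1/x_3&x_1/x_3&x_2/(\gamma x_3)&1\end{pmatrix}$$ with principal right eigenvector $\mathbf{w}^{EM}$. If $\delta,\gamma<1$, then $w_1^{EM}/w_4^{EM}<x_3$.
   Context: The principal right eigenvector is the positive (Perron) eigenvector belonging to the largest eigenvalue. *)

theory Defs
  imports "HOL-Analysis.Analysis"
begin

definition real_eigenvalue :: "real^'n^'n \<Rightarrow> real \<Rightarrow> bool" where
  "real_eigenvalue A \<mu> \<longleftrightarrow> (\<exists>v. v \<noteq> 0 \<and> A *v v = \<mu> *s v)"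

definition principal_right_eigenvector :: "real^'n^'n \<Rightarrow> real^'n \<Rightarrow> bool" where
  "principal_right_eigenvector A w \<longleftrightarrow>
     (\<forall>i. w $ i > 0) \<and>
     (\<exists>r. A *v w = r *s w \<and> (\<forall>\<mu>. real_eigenvalue A \<mu> \<longrightarrow> \<mu> \<le> r))"

definition Qmat :: "real \<Rightarrow> real \<Rightarrow> real \<Rightarrow> real \<Rightarrow> real \<Rightarrow> real^4^4" where
  "Qmat x1 x2 x3 \<gamma> \<delta> = vector [
     vector [1, \<delta> * x1, x2, x3],
     vector [1 / (\<delta> * x1), 1, x2 / x1, x3 / x1],
     vector [1 / x2, x1 / x2, 1, \<gamma> * x3 / x2],
     vector [1 / x3, x1 / x3, x2 / (\<gamma> * x3), 1]]"

end

theory Submission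
  imports Defs
begin

lemma vector_4':
  "(vector[a,b,c,d] :: 'a::zero^4) $ 1 = a"
  "(vector[a,b,c,d] :: 'a::zero^4) $ 2 = b"
  "(vector[a,b,c,d] :: 'a::zero^4) $ 3 = c"
  "(vector[a,b,c,d] :: 'a::zero^4) $ 4 = d"
  unfolding vector_def by simp_all

theorem mainTheorem13:
  fixes x1 x2 x3 \<gamma> \<delta> :: real and w :: "real^4"
  assumes "x1 > 0" "x2 > 0" "x3 > 0" "\<gamma> > 0" "\<delta> > 0" "\<gamma> \<noteq> 1" "\<delta> \<noteq> 1"
    and "principal_right_eigenvector (Qmat x1 x2 x3 \<gamma> \<delta>) w"
    and "\<delta> < 1" "\<gamma> < 1"
  shows "w $ 1 / w $ 4 < x3"
proof -
  from assms(8) obtain r where pos: "\<And>i. w $ i > 0" and ev: "Qmat x1 x2 x3 \<gamma> \<delta> *v w = r *s w"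
    unfolding principal_right_eigenvector_def by blast
  have e1: "r * w$1 = w$1 + \<delta>*x1*w$2 + x2*w$3 + x3*w$4"
    using arg_cong[OF ev, of "\<lambda>v. v$1"]
    by (simp add: matrix_vector_mult_def sum_4 Qmat_def vector_4')
  have e4: "r * w$4 = w$1/x3 + x1/x3*w$2 + x2/(\<gamma>*x3)*w$3 + w$4"
    using arg_cong[OF ev, of "\<lambda>v. v$4"]
    by (simp add: matrix_vector_mult_def sum_4 Qmat_def vector_4')
  have p1: "w$1 > 0" "w$2 > 0" "w$3 > 0" "w$4 > 0" using pos by auto
  have e4': "x3 * r * w$4 = w$1 + x1*w$2 + x2/\<gamma>*w$3 + x3*w$4"
    using e4 assms(2,3,4) by (simp add: field_simps)
  have a: "\<delta>*x1*w$2 < x1*w$2" using assms p1 by simp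
  have b: "x2*w$3 < x2/\<gamma>*w$3" using assms p1 by (simp add: field_simps)
  have rpos: "r > 0"
  proof (rule ccontr)
    assume "\<not> r > 0"
    hence "r * w$1 \<le> 0" using p1 by (simp add: mult_nonpos_nonneg)
    moreover have "w$1 + \<delta>*x1*w$2 + x2*w$3 + x3*w$4 > 0" using assms p1 by (simp add: add_pos_pos)
    ultimately show False using e1 by linarith
  qed
  have "r * w$1 < r * (x3 * w$4)" using e1 e4' a b by (simp add: algebra_simps)
  hence "w$1 < x3 * w$4" using rpos by simp
  thus ?thesis using p1 by (simp add: divide_less_eq)
qed

end
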